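(* Let $\mathcal{S}$ be a discrete state space, $\mathcal{A}$ a finite action space, $\mathcal{R}=[-1,1]^{\mathcal{S}\times\mathcal{A}}$, $\Pi$ the set of functions $\mathcal{S}\to\mathcal{A}$, $\mathcal{P}$ the set of planners $p:\mathcal{R}\to\Pi$, and let $\dot\pi\in\Pi$. Let $L$ be a computer language (universal Turing machine) with Kolmogorov complexity $K_L$, let $c\ge0$, and suppose $L$ is $c$-reasonable for $F$, i.e. $$\max_{(p,R)\in\mathcal{P}\times\mathcal{R},\ F_i\in F}\big(K_L(F_i(p,R))-K_L(p,R)\big)\le c.$$ If $(\dot p,\dot R)\in\mathcal{P}\times\mathcal{R}$ is compatible with $\dot\pi$ (i.e.\ $\dot p(\dot R)=\dot\pi$), then $(-\dot p,-\dot R)$ is of comparable complexity to $(\dot p,\dot R)$, i.e. $$\big|K_L(-\dot p,-\dot R)-K_L(\dot p,\dot R)\big|\le c.$$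
   Context: $K_L(x)$ denotes the length of the shortest program in $L$ that generates (a description of) the object $x$. For a planner $p$, $-p$ is the planner $(-p)(R)=p(-R)$; $-R$ is the pointwise negative of $R$. Notation: $0$ is the zero reward; $p_\pi(R)=\pi$ for all $R$; $R_\pi(s,a)=1$ if $\pi(s)=a$ and $0$ otherwise; $p_g(R)(s)=\arg\max_a R(s,a)$. Basic operations: $f_1(p)=(p,0)$; $f_2(R)=(p_g,R)$; $f_3(p,R)=p(R)$; $f_4(p,R)=(-p,-R)$; $f_5(\pi)=p_\pi$; $f_6(\pi)=R_\pi$. The set $F=\{F_1,F_2,F_3,F_4\}$ consists of $F_1=f_1\circ f_5\circ f_3$, $F_2=f_2\circ f_6\circ f_3$, $F_3=f_4\circ f_2\circ f_6\circ f_3$, $F_4=f_4$. *)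

theory Defs
  imports Main "HOL-Library.FuncSet" "HOL-Library.Extended_Real"
begin

type_synonym ('s,'a) reward = "'s \<times> 'a \<Rightarrow> real"
type_synonym ('s,'a) policy = "'s \<Rightarrow> 'a"
text \<open>Planners are functions R -> Pi, represented extensionally on the reward space.\<close>
type_synonym ('s,'a) planner = "('s,'a) reward \<Rightarrow> ('s,'a) policy"

definition Rspace :: "('s,'a) reward set" where
  "Rspace = {R. \<forall>x. R x \<in> {-1..1}}"

definition Planners :: "('s,'a) planner set" where
  "Planners = (Rspace \<rightarrow>\<^sub>E (UNIV :: ('s,'a) policy set))"

definition neg_reward :: "('s,'a) reward \<Rightarrow> ('s,'a) reward" where
  "neg_reward R = (\<lambda>x. - R x)"

definition neg_planner :: "('s,'a) planner \<Rightarrow> ('s,'a) planner" where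
  "neg_planner p = restrict (\<lambda>R. p (neg_reward R)) Rspace"

definition zero_reward :: "('s,'a) reward" where
  "zero_reward = (\<lambda>x. 0)"

definition const_planner :: "('s,'a) policy \<Rightarrow> ('s,'a) planner" where
  "const_planner \<pi> = restrict (\<lambda>R. \<pi>) Rspace"

definition policy_reward :: "('s,'a) policy \<Rightarrow> ('s,'a) reward" where
  "policy_reward \<pi> = (\<lambda>(s,a). if \<pi> s = a then 1 else 0)"

definition greedy_planner :: "('s,'a::finite) planner" where
  "greedy_planner = restrict (\<lambda>R s. SOME a. \<forall>b. R (s,b) \<le> R (s,a)) Rspace"

definition f1 :: "('s,'a) planner \<Rightarrow> ('s,'a) planner \<times> ('s,'a) reward" where
  "f1 p = (p, zero_reward)"
definition f2 :: "('s,'a::finite) reward \<Rightarrow> ('s,'a) planner \<times> ('s,'a) reward" where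
  "f2 R = (greedy_planner, R)"
definition f3 :: "('s,'a) planner \<times> ('s,'a) reward \<Rightarrow> ('s,'a) policy" where
  "f3 pR = fst pR (snd pR)"
definition f4 :: "('s,'a) planner \<times> ('s,'a) reward \<Rightarrow> ('s,'a) planner \<times> ('s,'a) reward" where
  "f4 pR = (neg_planner (fst pR), neg_reward (snd pR))"
definition f5 :: "('s,'a) policy \<Rightarrow> ('s,'a) planner" where
  "f5 \<pi> = const_planner \<pi>"
definition f6 :: "('s,'a) policy \<Rightarrow> ('s,'a) reward" where
  "f6 \<pi> = policy_reward \<pi>"

definition F1 where "F1 = f1 \<circ> f5 \<circ> f3"
definition F2 where "F2 = f2 \<circ> f6 \<circ> f3"
definition F3 where "F3 = f4 \<circ> f2 \<circ> f6 \<circ> f3"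
definition F4 where "F4 = f4"

definition Fset :: "(('s,'a::finite) planner \<times> ('s,'a) reward \<Rightarrow> ('s,'a) planner \<times> ('s,'a) reward) set" where
  "Fset = {F1, F2, F3, F4}"

text \<open>A computer language L is modelled as a partial decoder from binary programs to
  the objects they generate (planner-reward pairs).\<close>
type_synonym ('s,'a) language = "bool list \<Rightarrow> (('s,'a) planner \<times> ('s,'a) reward) option"

definition K :: "('s,'a) language \<Rightarrow> ('s,'a) planner \<times> ('s,'a) reward \<Rightarrow> enat" where
  "K L x = (if \<exists>q. L q = Some x
            then enat (LEAST n. \<exists>q. L q = Some x \<and> length q = n) else \<infinity>)"

definition reasonable :: "('s,'a::finite) language \<Rightarrow> real \<Rightarrow> bool" where
  "reasonable L c \<longleftrightarrow> (\<forall>p\<in>Planners. \<forall>R\<in>Rspace. \<forall>F\<in>Fset.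
      ereal_of_enat (K L (F (p,R))) \<le> ereal_of_enat (K L (p,R)) + ereal c)"

end

theory Submission
  imports Defs
begin

lemma nr_R: "R \<in> Rspace \<Longrightarrow> neg_reward R \<in> Rspace"
  by (auto simp: Rspace_def neg_reward_def)

lemma nrnr: "neg_reward (neg_reward R) = R"
  by (simp add: neg_reward_def)

lemma np_P: "neg_planner p \<in> Planners"
  by (simp add: Planners_def neg_planner_def)

lemma npnp: "p \<in> Planners \<Longrightarrow> neg_planner (neg_planner p) = p"
  apply (rule ext)
  subgoal for R
    by (cases "R \<in> Rspace") (auto simp: neg_planner_def Planners_def nr_R nrnr PiE_def extensional_def)
  done

theorem proposition4:
  fixes L :: "('s,'a::finite) language" and c :: real
    and p :: "('s,'a) planner" and R :: "('s,'a) reward" and \<pi> :: "('s,'a) policy"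
  assumes "c \<ge> 0"
    and "reasonable L c"
    and "p \<in> Planners" and "R \<in> Rspace"
    and "p R = \<pi>"
  shows "ereal_of_enat (K L (neg_planner p, neg_reward R)) \<le> ereal_of_enat (K L (p, R)) + ereal c
       \<and> ereal_of_enat (K L (p, R)) \<le> ereal_of_enat (K L (neg_planner p, neg_reward R)) + ereal c"
proof -
  have F4: "F4 \<in> (Fset :: (('s,'a) planner \<times> ('s,'a) reward \<Rightarrow> _) set)" by (simp add: Fset_def)
  have r: "\<And>p' R'. p' \<in> Planners \<Longrightarrow> R' \<in> Rspace \<Longrightarrow>
     ereal_of_enat (K L (F4 (p',R'))) \<le> ereal_of_enat (K L (p',R')) + ereal c"
    using assms(2) F4 unfolding reasonable_def by blast
  have a: "ereal_of_enat (K L (neg_planner p, neg_reward R)) \<le> ereal_of_enat (K L (p, R)) + ereal c"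
    using r[OF assms(3,4)] by (simp add: F4_def f4_def)
  have b: "ereal_of_enat (K L (p, R)) \<le> ereal_of_enat (K L (neg_planner p, neg_reward R)) + ereal c"
    using r[of "neg_planner p" "neg_reward R", OF np_P nr_R[OF assms(4)]]
    by (simp add: F4_def f4_def npnp[OF assms(3)] nrnr)
  show ?thesis using a b by blast
qed

end
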